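(* Consider the setting described in the context. For every $j\in\{1,\dots,n\}$ and every $t\in[0,T]$, the modal error $e_j(t)=d^h_j(t)u^h_j-d_j(t)u_j$ satisfies \[ \begin{aligned} \|e_j(t)\|_{L^2(\Omega)}\le\ & \|u_0\|_{L^2}\Big(2\|u^h_j-u_j\|_{L^2}+|\cos(\omega^h_jt)-\cos(\omega_jt)|\Big)\\ &+\frac{\|v_0\|_{L^2}}{\omega_j}\Big(\frac{\omega^h_j-\omega_j}{\omega_j}+2\|u^h_j-u_j\|_{L^2}+|\sin(\omega^h_jt)-\sin(\omega_jt)|\Big)\\ &+\frac{1}{\omega_j}\int_0^t\|f(\tau)\|_{L^2}\,d\tau\Big(\frac{\omega^h_j-\omega_j}{\omega_j}+2\|u^h_j-u_j\|_{L^2}+\max_{\tau\in[0,t]}|\sin(\omega^h_j\tau)-\sin(\omega_j\tau)|\Big). \end{aligned} \]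
   Context: Let $\Omega\subset\mathbb{R}^d$ be open, connected, with Lipschitz boundary, $T>0$, and $V\subseteq H^1(\Omega)$ a closed subspace (e.g. functions vanishing on a Dirichlet boundary part) such that the eigenvalue problem $(\nabla u,\nabla v)_{L^2(\Omega)^d}=\lambda(u,v)_{L^2(\Omega)}$ for all $v\in V$ has eigenpairs $(\lambda_i,u_i)_{i\ge1}$ with $0<\lambda_1\le\lambda_2\le\cdots$ and $\{u_i\}$ an $L^2(\Omega)$-orthonormal basis. Let $V^h\subset V$ be a finite-dimensional subspace of dimension $n$ (conforming Galerkin space with consistent mass, i.e. the exact $L^2$ inner product), with discrete eigenpairs $(\lambda^h_i,u^h_i)_{i=1}^n$ of the same problem restricted to $V^h$, ordered $0<\lambda^h_1\le\dots\le\lambda^h_n$ and $L^2$-orthonormal. Set $\omega_i=\sqrt{\lambda_i}$, $\omega^h_i=\sqrt{\lambda^h_i}$. Data: $u_0,v_0\in L^2(\Omega)$, $f\in C^0([0,T];L^2(\Omega))$. Define $u_{i,0}=(u_0,u_i)_{L^2}$, $v_{i,0}=(v_0,u_i)_{L^2}$, $f_i(t)=(f(t),u_i)_{L^2}$ and analogously $u^h_{i,0},v^h_{i,0},f^h_i$ with $u^h_i$ in place of $u_i$, and the modal coefficients \[ d_i(t)=u_{i,0}\cos(\omega_it)+\frac{v_{i,0}}{\omega_i}\sin(\omega_it)+\frac1{\omega_i}\int_0^t\sin(\omega_i(t-\tau))f_i(\tau)\,d\tau, \] \[ d^h_i(t)=u^h_{i,0}\cos(\omega^h_it)+\frac{v^h_{i,0}}{\omega^h_i}\sin(\omega^h_it)+\frac1{\omega^h_i}\int_0^t\sin(\omega^h_i(t-\tau))f^h_i(\tau)\,d\tau,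 \] so that the exact and Galerkin solutions of the wave equation $\partial_{tt}u-\Delta u=f$ are $u=\sum_{i\ge1}d_iu_i$ and $u^h=\sum_{i=1}^nd^h_iu^h_i$. *)

theory Defs
  imports "HOL-Analysis.Analysis"
begin

definition L2 :: "(real^'d) set \<Rightarrow> (real^'d \<Rightarrow> real) \<Rightarrow> bool" where
  "L2 \<Omega> u \<longleftrightarrow> set_borel_measurable lborel \<Omega> u \<and> set_integrable lborel \<Omega> (\<lambda>x. (u x)\<^sup>2)"

definition l2inner :: "(real^'d) set \<Rightarrow> (real^'d \<Rightarrow> real) \<Rightarrow> (real^'d \<Rightarrow> real) \<Rightarrow> real" where
  "l2inner \<Omega> u v = (LINT x:\<Omega>|lborel. u x * v x)"

definition l2norm :: "(real^'d) set \<Rightarrow> (real^'d \<Rightarrow> real) \<Rightarrow> real" where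
  "l2norm \<Omega> u = sqrt (l2inner \<Omega> u u)"

definition test_fun :: "(real^'d) set \<Rightarrow> (real^'d \<Rightarrow> real) \<Rightarrow> (real^'d \<Rightarrow> real^'d) \<Rightarrow> bool" where
  "test_fun \<Omega> \<phi> D\<phi> \<longleftrightarrow>
     (\<forall>x. (\<phi> has_derivative (\<lambda>h. D\<phi> x \<bullet> h)) (at x)) \<and> continuous_on UNIV D\<phi> \<and>
     compact (closure {x. \<phi> x \<noteq> 0}) \<and> closure {x. \<phi> x \<noteq> 0} \<subseteq> \<Omega>"

definition weak_grad :: "(real^'d) set \<Rightarrow> (real^'d \<Rightarrow> real) \<Rightarrow> (real^'d \<Rightarrow> real^'d) \<Rightarrow> bool" where
  "weak_grad \<Omega> u g \<longleftrightarrow> (\<forall>i. L2 \<Omega> (\<lambda>x. g x $ i)) \<and>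
     (\<forall>\<phi> D\<phi>. test_fun \<Omega> \<phi> D\<phi> \<longrightarrow>
        (\<forall>i. (LINT x:\<Omega>|lborel. u x * D\<phi> x $ i) = - (LINT x:\<Omega>|lborel. g x $ i * \<phi> x)))"

definition H1 :: "(real^'d) set \<Rightarrow> (real^'d \<Rightarrow> real) \<Rightarrow> bool" where
  "H1 \<Omega> u \<longleftrightarrow> L2 \<Omega> u \<and> (\<exists>g. weak_grad \<Omega> u g)"

definition wgrad :: "(real^'d) set \<Rightarrow> (real^'d \<Rightarrow> real) \<Rightarrow> (real^'d \<Rightarrow> real^'d)" where
  "wgrad \<Omega> u = (SOME g. weak_grad \<Omega> u g)"

definition agrad :: "(real^'d) set \<Rightarrow> (real^'d \<Rightarrow> real) \<Rightarrow> (real^'d \<Rightarrow> real) \<Rightarrow> real" where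
  "agrad \<Omega> u v = (LINT x:\<Omega>|lborel. wgrad \<Omega> u x \<bullet> wgrad \<Omega> v x)"

definition h1norm :: "(real^'d) set \<Rightarrow> (real^'d \<Rightarrow> real) \<Rightarrow> real" where
  "h1norm \<Omega> u = sqrt (l2inner \<Omega> u u + agrad \<Omega> u u)"

definition closed_H1_subspace :: "(real^'d) set \<Rightarrow> (real^'d \<Rightarrow> real) set \<Rightarrow> bool" where
  "closed_H1_subspace \<Omega> V \<longleftrightarrow>
     (\<forall>v\<in>V. H1 \<Omega> v) \<and> (\<lambda>x. 0) \<in> V \<and>
     (\<forall>v\<in>V. \<forall>w\<in>V. (\<lambda>x. v x + w x) \<in> V) \<and>
     (\<forall>c. \<forall>v\<in>V. (\<lambda>x. c * v x) \<in> V) \<and>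
     (\<forall>w vs. (\<forall>k. vs k \<in> V) \<and> H1 \<Omega> w \<and> (\<lambda>k. h1norm \<Omega> (\<lambda>x. vs k x - w x)) \<longlonglongrightarrow> 0
             \<longrightarrow> w \<in> V)"

definition galerkin_space :: "(real^'d) set \<Rightarrow> (real^'d \<Rightarrow> real) set \<Rightarrow> nat \<Rightarrow> (real^'d \<Rightarrow> real) set \<Rightarrow> bool" where
  "galerkin_space \<Omega> V n Vh \<longleftrightarrow>
     (\<exists>b. (\<forall>k\<in>{1..n}. b k \<in> V) \<and>
          Vh = {(\<lambda>x. \<Sum>k\<in>{1..n}. c k * b k x) | c. True} \<and>
          (\<forall>c. l2norm \<Omega> (\<lambda>x. \<Sum>k\<in>{1..n}. c k * b k x) = 0 \<longrightarrow> (\<forall>k\<in>{1..n}. c k = 0)))"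

text \<open>Modal coefficient of the (semi-discrete) wave solution.\<close>
definition modal_coeff :: "real \<Rightarrow> real \<Rightarrow> real \<Rightarrow> (real \<Rightarrow> real) \<Rightarrow> real \<Rightarrow> real" where
  "modal_coeff \<omega> a0 b0 g t =
     a0 * cos (\<omega> * t) + b0 / \<omega> * sin (\<omega> * t)
     + 1 / \<omega> * integral {0..t} (\<lambda>\<tau>. sin (\<omega> * (t - \<tau>)) * g \<tau>)"

end

theory Submission
  imports Defs
begin


lemma quad_disc:
  fixes a b c :: real
  assumes c: "c \<ge> 0" and h: "\<And>t. 0 \<le> a - 2*t*b + t^2*c"
  shows "b^2 \<le> a*c"
proof (cases "c = 0")
  case True
  have "b = 0"
  proof (rule ccontr)
    assume "b \<noteq> 0"
    have "0 \<le> a - 2*((a+1)/(2*b))*b" using h[of "(a+1)/(2*b)"] True by simp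
    also have "\<dots> = -1" using \<open>b\<noteq>0\<close> by (simp add: field_simps)
    finally show False by simp
  qed
  then show ?thesis using True by simp
next
  case False
  then have cp: "c > 0" using c by simp
  have "0 \<le> a - 2*(b/c)*b + (b/c)^2*c" by (rule h)
  also have "\<dots> = a - b^2/c" using cp by (simp add: field_simps power2_eq_square)
  finally have "b^2/c \<le> a" by simp
  then show ?thesis using cp by (simp add: field_simps)
qed

locale sip =
  fixes S :: "('a \<Rightarrow> 'v::real_vector) set" and B :: "('a \<Rightarrow> 'v) \<Rightarrow> ('a \<Rightarrow> 'v) \<Rightarrow> real"
  assumes zero: "(\<lambda>x. 0) \<in> S"
    and add: "f \<in> S \<Longrightarrow> g \<in> S \<Longrightarrow> (\<lambda>x. f x + g x) \<in> S"
    and scale: "f \<in> S \<Longrightarrow> (\<lambda>x. c *\<^sub>R f x) \<in> S"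
    and B_add: "f \<in> S \<Longrightarrow> g \<in> S \<Longrightarrow> h \<in> S \<Longrightarrow> B (\<lambda>x. f x + g x) h = B f h + B g h"
    and B_scale: "f \<in> S \<Longrightarrow> h \<in> S \<Longrightarrow> B (\<lambda>x. c *\<^sub>R f x) h = c * B f h"
    and B_sym: "f \<in> S \<Longrightarrow> g \<in> S \<Longrightarrow> B f g = B g f"
    and B_pos: "f \<in> S \<Longrightarrow> B f f \<ge> 0"
begin

lemma diff: "f \<in> S \<Longrightarrow> g \<in> S \<Longrightarrow> (\<lambda>x. f x - g x) \<in> S"
proof -
  assume "f \<in> S" "g \<in> S"
  then have "(\<lambda>x. f x + (-1) *\<^sub>R g x) \<in> S" using add scale by blast
  then show ?thesis by simp
qed

lemma B_diff: "f \<in> S \<Longrightarrow> g \<in> S \<Longrightarrow> h \<in> S \<Longrightarrow> B (\<lambda>x. f x - g x) h = B f h - B g h"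
proof -
  assume a: "f \<in> S" "g \<in> S" "h \<in> S"
  have "B (\<lambda>x. f x - g x) h = B (\<lambda>x. f x + (-1) *\<^sub>R g x) h" by simp
  also have "\<dots> = B f h + B (\<lambda>x. (-1) *\<^sub>R g x) h" using a by (intro B_add scale)
  also have "\<dots> = B f h - B g h" using a B_scale[of g h "-1"] by simp
  finally show ?thesis .
qed

lemma B_add_r: "f \<in> S \<Longrightarrow> g \<in> S \<Longrightarrow> h \<in> S \<Longrightarrow> B h (\<lambda>x. f x + g x) = B h f + B h g"
  by (simp add: B_sym[of h] add B_add)
lemma B_diff_r: "f \<in> S \<Longrightarrow> g \<in> S \<Longrightarrow> h \<in> S \<Longrightarrow> B h (\<lambda>x. f x - g x) = B h f - B h g"
  by (simp add: B_sym[of h] diff B_diff)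
lemma B_scale_r: "f \<in> S \<Longrightarrow> h \<in> S \<Longrightarrow> B h (\<lambda>x. c *\<^sub>R f x) = c * B h f"
  by (simp add: B_sym[of h] scale B_scale)

lemma sum_mem: "finite I \<Longrightarrow> (\<And>i. i \<in> I \<Longrightarrow> f i \<in> S) \<Longrightarrow> (\<lambda>x. \<Sum>i\<in>I. f i x) \<in> S"
proof (induction I rule: finite_induct)
  case empty then show ?case using zero by simp
next
  case (insert a I) then show ?case using add[of "f a" "\<lambda>x. \<Sum>i\<in>I. f i x"] by simp
qed

lemma B_sum: "finite I \<Longrightarrow> (\<And>i. i \<in> I \<Longrightarrow> f i \<in> S) \<Longrightarrow> h \<in> S \<Longrightarrow>
   B (\<lambda>x. \<Sum>i\<in>I. f i x) h = (\<Sum>i\<in>I. B (f i) h)"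
proof (induction I rule: finite_induct)
  case empty
  have "B (\<lambda>x. 0) h = B (\<lambda>x. 0 *\<^sub>R (\<lambda>x. 0) x) h" by simp
  also have "\<dots> = 0" using B_scale[OF zero empty(2), of 0] by simp
  finally show ?case by simp
next
  case (insert a I) then show ?case
    using B_add[of "f a" "\<lambda>x. \<Sum>i\<in>I. f i x" h] sum_mem[of I f] by simp
qed

lemma B_sum_r: "finite I \<Longrightarrow> (\<And>i. i \<in> I \<Longrightarrow> f i \<in> S) \<Longrightarrow> h \<in> S \<Longrightarrow>
   B h (\<lambda>x. \<Sum>i\<in>I. f i x) = (\<Sum>i\<in>I. B h (f i))"
  by (simp add: B_sym[of h] sum_mem B_sum)

lemma lin_mem: "finite I \<Longrightarrow> (\<And>i. i \<in> I \<Longrightarrow> f i \<in> S) \<Longrightarrow> (\<lambda>x. \<Sum>i\<in>I. c i *\<^sub>R f i x) \<in> S"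
  using sum_mem[of I "\<lambda>i x. c i *\<^sub>R f i x"] scale by blast

lemma B_lin: "finite I \<Longrightarrow> (\<And>i. i \<in> I \<Longrightarrow> f i \<in> S) \<Longrightarrow> h \<in> S \<Longrightarrow>
   B (\<lambda>x. \<Sum>i\<in>I. c i *\<^sub>R f i x) h = (\<Sum>i\<in>I. c i * B (f i) h)"
  using B_sum[of I "\<lambda>i x. c i *\<^sub>R f i x" h] scale B_scale by simp

lemma B_lin_r: "finite I \<Longrightarrow> (\<And>i. i \<in> I \<Longrightarrow> f i \<in> S) \<Longrightarrow> h \<in> S \<Longrightarrow>
   B h (\<lambda>x. \<Sum>i\<in>I. c i *\<^sub>R f i x) = (\<Sum>i\<in>I. c i * B h (f i))"
  by (simp add: B_sym[of h] lin_mem B_lin)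

lemma CS: assumes "f \<in> S" "g \<in> S" shows "(B f g)^2 \<le> B f f * B g g"
proof (rule quad_disc)
  show "0 \<le> B g g" using B_pos assms by simp
  fix t
  have m: "(\<lambda>x. t *\<^sub>R g x) \<in> S" using scale assms by simp
  have "0 \<le> B (\<lambda>x. f x - t *\<^sub>R g x) (\<lambda>x. f x - t *\<^sub>R g x)" using B_pos diff m assms by simp
  also have "\<dots> = B f f - 2*t*B f g + t^2 * B g g"
    using assms m B_sym[of g f]
    by (simp add: B_diff B_diff_r diff m B_scale B_scale_r power2_eq_square algebra_simps)
  finally show "0 \<le> B f f - 2*t*B f g + t^2 * B g g" .
qed

lemma CS_abs: assumes "f \<in> S" "g \<in> S" shows "\<bar>B f g\<bar> \<le> sqrt (B f f) * sqrt (B g g)"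
proof -
  have "\<bar>B f g\<bar> = sqrt ((B f g)^2)" by simp
  also have "\<dots> \<le> sqrt (B f f * B g g)" using CS[OF assms] real_sqrt_le_mono by blast
  finally show ?thesis by (simp add: real_sqrt_mult)
qed

lemma tri: assumes "f \<in> S" "g \<in> S"
  shows "sqrt (B (\<lambda>x. f x + g x) (\<lambda>x. f x + g x)) \<le> sqrt (B f f) + sqrt (B g g)"
proof -
  have "B (\<lambda>x. f x + g x) (\<lambda>x. f x + g x) = B f f + 2 * B f g + B g g"
    using assms by (simp add: B_add B_add_r add B_sym[of f g])
  also have "\<dots> \<le> B f f + 2 * (sqrt (B f f) * sqrt (B g g)) + B g g"
    using CS_abs[OF assms] by simp
  also have "\<dots> = (sqrt (B f f) + sqrt (B g g))^2"
    using B_pos assms by (simp add: power2_eq_square algebra_simps)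
  finally have "sqrt (B (\<lambda>x. f x + g x) (\<lambda>x. f x + g x)) \<le> sqrt ((sqrt (B f f) + sqrt (B g g))^2)"
    using real_sqrt_le_mono by blast
  then show ?thesis using B_pos assms by simp
qed

lemma nscale: assumes "f \<in> S" shows "sqrt (B (\<lambda>x. c *\<^sub>R f x) (\<lambda>x. c *\<^sub>R f x)) = \<bar>c\<bar> * sqrt (B f f)"
proof -
  have "B (\<lambda>x. c *\<^sub>R f x) (\<lambda>x. c *\<^sub>R f x) = c^2 * B f f"
    using assms by (simp add: B_scale B_scale_r scale power2_eq_square)
  then show ?thesis by (simp add: real_sqrt_mult)
qed

end


lemma L2_alt: "L2 \<Omega> u \<longleftrightarrow> (\<lambda>x. indicator \<Omega> x * u x) \<in> borel_measurable lborel \<and>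
    integrable lborel (\<lambda>x. indicator \<Omega> x * (u x)\<^sup>2)"
  by (simp add: L2_def set_borel_measurable_def set_integrable_def)

lemma l2inner_alt: "l2inner \<Omega> u v = integral\<^sup>L lborel (\<lambda>x. indicator \<Omega> x * (u x * v x))"
  by (simp add: l2inner_def set_lebesgue_integral_def)

lemma L2_meas: "L2 \<Omega> u \<Longrightarrow> (\<lambda>x. indicator \<Omega> x * u x) \<in> borel_measurable lborel"
  by (simp add: L2_alt)

lemma ind_sq: "(indicator A x :: real) * indicator A x = indicator A x"
  by (simp add: indicator_def)

lemma L2_prod_int: assumes "L2 \<Omega> u" "L2 \<Omega> v"
  shows "integrable lborel (\<lambda>x. indicator \<Omega> x * (u x * v x))"
proof (rule Bochner_Integration.integrable_bound)
  show "integrable lborel (\<lambda>x. indicator \<Omega> x * (u x)\<^sup>2 + indicator \<Omega> x * (v x)\<^sup>2)"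
    using assms by (simp add: L2_alt)
  have "(\<lambda>x. (indicator \<Omega> x * u x) * (indicator \<Omega> x * v x)) \<in> borel_measurable lborel"
    using borel_measurable_times[OF L2_meas[OF assms(1)] L2_meas[OF assms(2)]] .
  moreover have "(\<lambda>x. (indicator \<Omega> x * u x) * (indicator \<Omega> x * v x)) = (\<lambda>x. indicator \<Omega> x * (u x * v x))"
    by (auto simp: indicator_def)
  ultimately show "(\<lambda>x. indicator \<Omega> x * (u x * v x)) \<in> borel_measurable lborel" by simp
  show "AE x in lborel. norm (indicator \<Omega> x * (u x * v x)) \<le> norm (indicator \<Omega> x * (u x)\<^sup>2 + indicator \<Omega> x * (v x)\<^sup>2)"
  proof (rule AE_I2)
    fix x
    have "2*(\<bar>u x\<bar>*\<bar>v x\<bar>) \<le> (u x)\<^sup>2 + (v x)\<^sup>2" using sum_squares_bound[of "\<bar>u x\<bar>" "\<bar>v x\<bar>"] by (simp add: mult.assoc)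
    moreover have "0 \<le> \<bar>u x\<bar>*\<bar>v x\<bar>" by simp
    ultimately have "\<bar>u x\<bar>*\<bar>v x\<bar> \<le> (u x)\<^sup>2 + (v x)\<^sup>2" by linarith
    then have "\<bar>u x * v x\<bar> \<le> (u x)\<^sup>2 + (v x)\<^sup>2" by (simp add: abs_mult)
    then show "norm (indicator \<Omega> x * (u x * v x)) \<le> norm (indicator \<Omega> x * (u x)\<^sup>2 + indicator \<Omega> x * (v x)\<^sup>2)"
      by (auto simp: indicator_def)
  qed
qed

lemma L2_add: assumes "L2 \<Omega> u" "L2 \<Omega> v" shows "L2 \<Omega> (\<lambda>x. u x + v x)"
proof -
  have m: "(\<lambda>x. indicator \<Omega> x * u x + indicator \<Omega> x * v x) \<in> borel_measurable lborel"
    using borel_measurable_add[OF L2_meas[OF assms(1)] L2_meas[OF assms(2)]] .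
  have "integrable lborel (\<lambda>x. indicator \<Omega> x * (u x)\<^sup>2 + 2 * (indicator \<Omega> x * (u x * v x)) + indicator \<Omega> x * (v x)\<^sup>2)"
    using assms L2_prod_int[OF assms] by (simp add: L2_alt)
  moreover have "(\<lambda>x. indicator \<Omega> x * (u x)\<^sup>2 + 2 * (indicator \<Omega> x * (u x * v x)) + indicator \<Omega> x * (v x)\<^sup>2)
     = (\<lambda>x. indicator \<Omega> x * (u x + v x)\<^sup>2)" by (auto simp: power2_eq_square algebra_simps)
  ultimately show ?thesis using m by (simp add: L2_alt distrib_left)
qed

lemma L2_scale: assumes "L2 \<Omega> u" shows "L2 \<Omega> (\<lambda>x. c * u x)"
proof -
  have "(\<lambda>x. c * (indicator \<Omega> x * u x)) \<in> borel_measurable lborel" 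
    using borel_measurable_times[OF borel_measurable_const L2_meas[OF assms(1)]] .
  moreover have "integrable lborel (\<lambda>x. c^2 * (indicator \<Omega> x * (u x)\<^sup>2))" using assms by (simp add: L2_alt)
  ultimately show ?thesis by (simp add: L2_alt power_mult_distrib algebra_simps)
qed

lemma L2_sip: "sip {w. L2 \<Omega> w} (l2inner \<Omega>)"
proof
  show "(\<lambda>x. 0) \<in> {w. L2 \<Omega> w}" by (simp add: L2_alt)
next
  fix f g assume "f \<in> {w. L2 \<Omega> w}" "g \<in> {w. L2 \<Omega> w}"
  then show "(\<lambda>x. f x + g x) \<in> {w. L2 \<Omega> w}" using L2_add by auto
next
  fix f c assume "f \<in> {w. L2 \<Omega> w}"
  then show "(\<lambda>x. c *\<^sub>R f x) \<in> {w. L2 \<Omega> w}" using L2_scale by auto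
next
  fix f g h assume a: "f \<in> {w. L2 \<Omega> w}" "g \<in> {w. L2 \<Omega> w}" "h \<in> {w. L2 \<Omega> w}"
  have "l2inner \<Omega> (\<lambda>x. f x + g x) h = integral\<^sup>L lborel (\<lambda>x. indicator \<Omega> x * (f x * h x) + indicator \<Omega> x * (g x * h x))"
    by (simp add: l2inner_alt algebra_simps)
  also have "\<dots> = l2inner \<Omega> f h + l2inner \<Omega> g h"
    using a by (simp add: l2inner_alt L2_prod_int)
  finally show "l2inner \<Omega> (\<lambda>x. f x + g x) h = l2inner \<Omega> f h + l2inner \<Omega> g h" .
next
  fix f h c assume a: "f \<in> {w. L2 \<Omega> w}" "h \<in> {w. L2 \<Omega> w}"
  have "l2inner \<Omega> (\<lambda>x. c *\<^sub>R f x) h = integral\<^sup>L lborel (\<lambda>x. c * (indicator \<Omega> x * (f x * h x)))"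
    by (simp add: l2inner_alt algebra_simps)
  then show "l2inner \<Omega> (\<lambda>x. c *\<^sub>R f x) h = c * l2inner \<Omega> f h" by (simp add: l2inner_alt)
next
  fix f g show "l2inner \<Omega> f g = l2inner \<Omega> g f" by (simp add: l2inner_alt mult.commute)
next
  fix f show "0 \<le> l2inner \<Omega> f f" unfolding l2inner_alt by (rule integral_nonneg_AE) auto
qed



definition SF :: "(real^'d) set \<Rightarrow> (real^'d \<Rightarrow> real^'d) set" where
  "SF \<Omega> = {G. \<forall>i. L2 \<Omega> (\<lambda>x. G x $ i)}"

definition gi :: "(real^'d) set \<Rightarrow> (real^'d \<Rightarrow> real^'d) \<Rightarrow> (real^'d \<Rightarrow> real^'d) \<Rightarrow> real" where
  "gi \<Omega> G H = (\<Sum>i\<in>UNIV. l2inner \<Omega> (\<lambda>x. G x $ i) (\<lambda>x. H x $ i))"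

lemma SF_sip: "sip (SF \<Omega>) (gi \<Omega>)"
proof -
  interpret L: sip "{w. L2 \<Omega> w}" "l2inner \<Omega>" by (rule L2_sip)
  show ?thesis
  proof
    show "(\<lambda>x. 0) \<in> SF \<Omega>" using L.zero by (simp add: SF_def)
  next
    fix f g assume "f \<in> SF \<Omega>" "g \<in> SF \<Omega>"
    then show "(\<lambda>x. f x + g x) \<in> SF \<Omega>" using L.add by (auto simp: SF_def)
  next
    fix f c assume "f \<in> SF \<Omega>"
    then show "(\<lambda>x. c *\<^sub>R f x) \<in> SF \<Omega>" using L.scale by (auto simp: SF_def)
  next
    fix f g h assume a: "f \<in> SF \<Omega>" "g \<in> SF \<Omega>" "h \<in> SF \<Omega>"
    then show "gi \<Omega> (\<lambda>x. f x + g x) h = gi \<Omega> f h + gi \<Omega> g h"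
      using L.B_add by (auto simp: SF_def gi_def sum.distrib)
  next
    fix f h c assume a: "f \<in> SF \<Omega>" "h \<in> SF \<Omega>"
    then show "gi \<Omega> (\<lambda>x. c *\<^sub>R f x) h = c * gi \<Omega> f h"
      using L.B_scale by (auto simp: SF_def gi_def sum_distrib_left)
  next
    fix f g assume a: "f \<in> SF \<Omega>" "g \<in> SF \<Omega>"
    then show "gi \<Omega> f g = gi \<Omega> g f"
      using L.B_sym by (auto simp: SF_def gi_def)
  next
    fix f assume a: "f \<in> SF \<Omega>"
    then show "0 \<le> gi \<Omega> f f"
      using L.B_pos by (auto simp: SF_def gi_def intro: sum_nonneg)
  qed
qed

lemma wgrad_ok: "H1 \<Omega> u \<Longrightarrow> weak_grad \<Omega> u (wgrad \<Omega> u)"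
  unfolding H1_def wgrad_def by (auto intro: someI[of "weak_grad \<Omega> u"])

lemma wgrad_SF: "H1 \<Omega> u \<Longrightarrow> wgrad \<Omega> u \<in> SF \<Omega>"
  using wgrad_ok[of \<Omega> u] by (simp add: weak_grad_def SF_def)

lemma agrad_gi: assumes "H1 \<Omega> u" "H1 \<Omega> v"
  shows "agrad \<Omega> u v = gi \<Omega> (wgrad \<Omega> u) (wgrad \<Omega> v)"
proof -
  have L: "\<And>i. L2 \<Omega> (\<lambda>x. wgrad \<Omega> u x $ i)" "\<And>i. L2 \<Omega> (\<lambda>x. wgrad \<Omega> v x $ i)"
    using wgrad_SF[OF assms(1)] wgrad_SF[OF assms(2)] by (auto simp: SF_def)
  have "agrad \<Omega> u v = integral\<^sup>L lborel (\<lambda>x. \<Sum>i\<in>UNIV. indicator \<Omega> x * (wgrad \<Omega> u x $ i * wgrad \<Omega> v x $ i))"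
    by (simp add: agrad_def set_lebesgue_integral_def inner_vec_def sum_distrib_left)
  also have "\<dots> = (\<Sum>i\<in>UNIV. integral\<^sup>L lborel (\<lambda>x. indicator \<Omega> x * (wgrad \<Omega> u x $ i * wgrad \<Omega> v x $ i)))"
    by (rule Bochner_Integration.integral_sum[where I=UNIV and M=lborel and f="\<lambda>i x. indicator \<Omega> x * (wgrad \<Omega> u x $ i * wgrad \<Omega> v x $ i)"]) (rule L2_prod_int[OF L(1) L(2)])
  also have "\<dots> = gi \<Omega> (wgrad \<Omega> u) (wgrad \<Omega> v)" by (simp add: gi_def l2inner_alt)
  finally show ?thesis .
qed

lemma homog_sys:
  fixes a :: "nat \<Rightarrow> nat \<Rightarrow> real"
  shows "finite K \<Longrightarrow> m < card K \<Longrightarrow>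
    \<exists>c. (\<exists>k\<in>K. c k \<noteq> 0) \<and> (\<forall>k. k \<notin> K \<longrightarrow> c k = 0) \<and> (\<forall>i<m. (\<Sum>k\<in>K. a i k * c k) = 0)"
proof (induction m arbitrary: K a)
  case 0
  then obtain p where p: "p \<in> K" by (metis card.empty card_ge_0_finite ex_in_conv less_irrefl)
  show ?case by (rule exI[of _ "indicator {p}"]) (use p in \<open>auto simp: indicator_def\<close>)
next
  case (Suc m)
  show ?case
  proof (cases "\<forall>k\<in>K. a m k = 0")
    case True
    from Suc.IH[of K a] Suc.prems obtain c where c: "\<exists>k\<in>K. c k \<noteq> 0" "\<forall>k. k \<notin> K \<longrightarrow> c k = 0"
      "\<forall>i<m. (\<Sum>k\<in>K. a i k * c k) = 0" by auto
    have "\<forall>i<Suc m. (\<Sum>k\<in>K. a i k * c k) = 0"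
      using c(3) True by (auto simp: less_Suc_eq)
    then show ?thesis using c by blast
  next
    case False
    then obtain p where p: "p \<in> K" "a m p \<noteq> 0" by auto
    define a' where "a' i k = a i k - (a i p / a m p) * a m k" for i k
    have cK: "m < card (K - {p})" using Suc.prems p by simp
    from Suc.IH[of "K - {p}" a'] Suc.prems cK obtain c' where c':
      "\<exists>k\<in>K-{p}. c' k \<noteq> 0" "\<forall>k. k \<notin> K-{p} \<longrightarrow> c' k = 0"
      "\<forall>i<m. (\<Sum>k\<in>K-{p}. a' i k * c' k) = 0" by auto
    define s where "s = (\<Sum>k\<in>K-{p}. a m k * c' k)"
    define c where "c = c'(p := - s / a m p)"
    have split: "(\<Sum>k\<in>K. a i k * c k) = a i p * c p + (\<Sum>k\<in>K-{p}. a i k * c' k)" for i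
      using Suc.prems(1) p(1) unfolding c_def by (simp add: sum.remove)
    have row_m: "(\<Sum>k\<in>K. a m k * c k) = 0"
      using split[of m] p(2) by (simp add: c_def s_def)
    have row_i: "(\<Sum>k\<in>K. a i k * c k) = 0" if "i < m" for i
    proof -
      have "(\<Sum>k\<in>K-{p}. a' i k * c' k) = (\<Sum>k\<in>K-{p}. a i k * c' k) - (a i p / a m p) * s"
        by (simp add: a'_def s_def algebra_simps sum_subtractf sum_distrib_left)
      then have "(\<Sum>k\<in>K-{p}. a i k * c' k) = (a i p / a m p) * s" using c'(3) that by simp
      then show ?thesis using split[of i] p(2) by (simp add: c_def)
    qed
    have "\<forall>i<Suc m. (\<Sum>k\<in>K. a i k * c k) = 0"
      using row_m row_i by (auto simp: less_Suc_eq)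
    moreover have "\<exists>k\<in>K. c k \<noteq> 0" using c'(1) by (auto simp: c_def)
    moreover have "\<forall>k. k \<notin> K \<longrightarrow> c k = 0" using c'(2) p(1) by (auto simp: c_def)
    ultimately show ?thesis by blast
  qed
qed



lemma mono_from:
  fixes g :: "nat \<Rightarrow> real"
  assumes "\<And>i. i \<ge> a \<Longrightarrow> i < b \<Longrightarrow> g i \<le> g (Suc i)" "a \<le> k" "k \<le> l" "l \<le> b"
  shows "g k \<le> g l"
  using assms(3,4)
proof (induction l rule: dec_induct)
  case base then show ?case by simp
next
  case (step l) then show ?case using assms(1)[of l] assms(2) by simp
qed

lemma eig_compare:
  fixes \<Omega> :: "(real^'d) set" and V Vh :: "(real^'d \<Rightarrow> real) set"
    and lam lamh :: "nat \<Rightarrow> real" and u uh :: "nat \<Rightarrow> real^'d \<Rightarrow> real"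
  assumes V: "closed_H1_subspace \<Omega> V"
    and eig_mem: "\<And>i. i \<ge> 1 \<Longrightarrow> u i \<in> V"
    and eig_eq: "\<And>i v. i \<ge> 1 \<Longrightarrow> v \<in> V \<Longrightarrow> agrad \<Omega> (u i) v = lam i * l2inner \<Omega> (u i) v"
    and eig_mono: "\<And>i. i \<ge> 1 \<Longrightarrow> lam i \<le> lam (Suc i)"
    and eig_on: "\<And>i k. i \<ge> 1 \<Longrightarrow> k \<ge> 1 \<Longrightarrow> l2inner \<Omega> (u i) (u k) = (if i = k then 1 else 0)"
    and eig_basis: "\<And>w. L2 \<Omega> w \<Longrightarrow>
          (\<lambda>N. l2norm \<Omega> (\<lambda>x. w x - (\<Sum>i\<in>{1..N}. l2inner \<Omega> w (u i) * u i x))) \<longlonglongrightarrow> 0"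
    and Vh_sub: "Vh \<subseteq> V"
    and deig_mem: "\<And>i. i \<in> {1..n} \<Longrightarrow> uh i \<in> Vh"
    and deig_eq: "\<And>i v. i \<in> {1..n} \<Longrightarrow> v \<in> Vh \<Longrightarrow> agrad \<Omega> (uh i) v = lamh i * l2inner \<Omega> (uh i) v"
    and deig_mono: "\<And>i. i \<in> {1..<n} \<Longrightarrow> lamh i \<le> lamh (Suc i)"
    and deig_on: "\<And>i k. i \<in> {1..n} \<Longrightarrow> k \<in> {1..n} \<Longrightarrow>
          l2inner \<Omega> (uh i) (uh k) = (if i = k then 1 else 0)"
    and j: "j \<in> {1..n}"
  shows "lam j \<le> lamh j"
proof -
  interpret L: sip "{w. L2 \<Omega> w}" "l2inner \<Omega>" by (rule L2_sip)
  interpret F: sip "SF \<Omega>" "gi \<Omega>" by (rule SF_sip)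
  have H1V0: "\<forall>v\<in>V. H1 \<Omega> v" using V unfolding closed_H1_subspace_def by (rule conjunct1)
  have H1V: "H1 \<Omega> v" if "v \<in> V" for v using H1V0 that by (rule bspec)
  have Hu: "H1 \<Omega> (u i)" if "i \<ge> 1" for i using H1V[OF eig_mem[OF that]] .
  have Huh: "H1 \<Omega> (uh k)" if "k \<in> {1..n}" for k using H1V[OF subsetD[OF Vh_sub deig_mem[OF that]]] .
  have Lu: "u i \<in> {w. L2 \<Omega> w}" if "i \<ge> 1" for i using Hu[OF that] by (simp add: H1_def)
  have Luh: "uh k \<in> {w. L2 \<Omega> w}" if "k \<in> {1..n}" for k using Huh[OF that] by (simp add: H1_def)
  define A where "A k = wgrad \<Omega> (uh k)" for k
  define Bg where "Bg i = wgrad \<Omega> (u i)" for i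
  have FA: "A k \<in> SF \<Omega>" if "k \<in> {1..n}" for k unfolding A_def using wgrad_SF[OF Huh[OF that]] .
  have FB: "Bg i \<in> SF \<Omega>" if "i \<ge> 1" for i unfolding Bg_def using wgrad_SF[OF Hu[OF that]] .
  have gAA: "gi \<Omega> (A k) (A l) = lamh k * (if k = l then 1 else 0)" if "k \<in> {1..n}" "l \<in> {1..n}" for k l
    unfolding A_def agrad_gi[OF Huh[OF that(1)] Huh[OF that(2)], symmetric] deig_eq[OF that(1) deig_mem[OF that(2)]] deig_on[OF that]
    by simp
  have gBB: "gi \<Omega> (Bg i) (Bg l) = lam i * (if i = l then 1 else 0)" if "i \<ge> 1" "l \<ge> 1" for i l
    unfolding Bg_def agrad_gi[OF Hu[OF that(1)] Hu[OF that(2)], symmetric] eig_eq[OF that(1) eig_mem[OF that(2)]] eig_on[OF that]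
    by simp
  have gBA: "gi \<Omega> (Bg i) (A k) = lam i * l2inner \<Omega> (uh k) (u i)" if "i \<ge> 1" "k \<in> {1..n}" for i k
    unfolding Bg_def A_def agrad_gi[OF Hu[OF that(1)] Huh[OF that(2)], symmetric]
      eig_eq[OF that(1) subsetD[OF Vh_sub deig_mem[OF that(2)]]] L.B_sym[OF Lu[OF that(1)] Luh[OF that(2)]] ..
  have jn: "1 \<le> j" "j \<le> n" using j by auto
  have Kn: "k \<in> {1..n}" if "k \<in> {1..j}" for k using that jn by auto
  obtain c where c: "\<exists>k\<in>{1..j}. c k \<noteq> 0" "\<forall>k. k \<notin> {1..j} \<longrightarrow> c k = 0"
     "\<forall>i<j-1. (\<Sum>k\<in>{1..j}. l2inner \<Omega> (u (Suc i)) (uh k) * c k) = 0"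
    using homog_sys[of "{1..j}" "j-1" "\<lambda>i k. l2inner \<Omega> (u (Suc i)) (uh k)"] jn by auto
  define w where "w = (\<lambda>x. \<Sum>k\<in>{1..j}. c k *\<^sub>R uh k x)"
  have Lw: "w \<in> {w. L2 \<Omega> w}" unfolding w_def by (rule L.lin_mem) (use Luh Kn in auto)
  define a where "a i = l2inner \<Omega> w (u i)" for i
  have a_exp: "a i = (\<Sum>k\<in>{1..j}. c k * l2inner \<Omega> (uh k) (u i))" if "i \<ge> 1" for i
    unfolding a_def w_def by (rule L.B_lin) (use Luh Kn Lu that in auto)
  have a0: "a i = 0" if "1 \<le> i" "i < j" for i
  proof -
    have "a i = (\<Sum>k\<in>{1..j}. l2inner \<Omega> (u (Suc (i-1))) (uh k) * c k)"
      using a_exp[OF that(1)] that L.B_sym Lu Luh Kn by (auto intro!: sum.cong)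
    moreover have "i - 1 < j - 1" using that by simp
    ultimately show ?thesis using c(3) by simp
  qed
  have uhw: "l2inner \<Omega> (uh k) w = c k" if "k \<in> {1..j}" for k
  proof -
    have "l2inner \<Omega> (uh k) w = (\<Sum>l\<in>{1..j}. c l * l2inner \<Omega> (uh k) (uh l))"
      unfolding w_def by (rule L.B_lin_r) (use Luh Kn that in auto)
    also have "\<dots> = (\<Sum>l\<in>{1..j}. (if k = l then c l else 0))"
      using deig_on Kn that by (intro sum.cong) auto
    also have "\<dots> = c k" using that by simp
    finally show ?thesis .
  qed
  define W where "W = (\<Sum>k\<in>{1..j}. c k * c k)"
  have ww: "l2inner \<Omega> w w = W"
  proof -
    have "l2inner \<Omega> w w = (\<Sum>k\<in>{1..j}. c k * l2inner \<Omega> (uh k) w)"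
      by (subst (1) w_def, rule L.B_lin) (use Luh Kn Lw in auto)
    then show ?thesis using uhw by (simp add: W_def)
  qed
  have Wpos: "W > 0"
  proof -
    obtain k where k: "k \<in> {1..j}" "c k \<noteq> 0" using c(1) by blast
    have "c k * c k \<le> W" unfolding W_def
      by (rule member_le_sum) (use k in auto)
    moreover have "c k * c k > 0" using k(2) by (auto simp: zero_less_mult_iff linorder_neq_iff)
    ultimately show ?thesis by simp
  qed
  define G where "G = (\<lambda>x. \<Sum>k\<in>{1..j}. c k *\<^sub>R A k x)"
  have FG: "G \<in> SF \<Omega>" unfolding G_def by (rule F.lin_mem) (use FA Kn in auto)
  have gAG: "gi \<Omega> (A k) G = lamh k * c k" if "k \<in> {1..j}" for k
  proof -
    have "gi \<Omega> (A k) G = (\<Sum>l\<in>{1..j}. c l * gi \<Omega> (A k) (A l))"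
      unfolding G_def by (rule F.B_lin_r) (use FA Kn that in auto)
    also have "\<dots> = (\<Sum>l\<in>{1..j}. (if k = l then lamh k * c l else 0))"
      using gAA Kn that by (intro sum.cong) auto
    also have "\<dots> = lamh k * c k" using that by simp
    finally show ?thesis .
  qed
  have gGG: "gi \<Omega> G G = (\<Sum>k\<in>{1..j}. lamh k * (c k * c k))"
  proof -
    have "gi \<Omega> G G = (\<Sum>k\<in>{1..j}. c k * gi \<Omega> (A k) G)"
      by (subst (1) G_def, rule F.B_lin) (use FA Kn FG in auto)
    then show ?thesis using gAG by (simp add: algebra_simps)
  qed
  have gBG: "gi \<Omega> (Bg i) G = lam i * a i" if "i \<ge> 1" for i
  proof -
    have "gi \<Omega> (Bg i) G = (\<Sum>k\<in>{1..j}. c k * gi \<Omega> (Bg i) (A k))"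
      unfolding G_def by (rule F.B_lin_r) (use FA FB Kn that in auto)
    also have "\<dots> = lam i * (\<Sum>k\<in>{1..j}. c k * l2inner \<Omega> (uh k) (u i))"
      using gBA Kn that by (simp add: sum_distrib_left algebra_simps)
    finally show ?thesis using a_exp that by simp
  qed
  have Nbound: "(\<Sum>i\<in>{1..N}. lam i * (a i * a i)) \<le> (\<Sum>k\<in>{1..j}. lamh k * (c k * c k))" for N
  proof -
    define H where "H = (\<lambda>x. \<Sum>i\<in>{1..N}. a i *\<^sub>R Bg i x)"
    have FH: "H \<in> SF \<Omega>" unfolding H_def by (rule F.lin_mem) (use FB in auto)
    have gBH: "gi \<Omega> (Bg i) H = lam i * a i" if "i \<in> {1..N}" for i
    proof -
      have "gi \<Omega> (Bg i) H = (\<Sum>l\<in>{1..N}. a l * gi \<Omega> (Bg i) (Bg l))"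
        unfolding H_def by (rule F.B_lin_r) (use FB that in auto)
      also have "\<dots> = (\<Sum>l\<in>{1..N}. (if i = l then lam i * a l else 0))"
        using gBB that by (intro sum.cong) auto
      also have "\<dots> = lam i * a i" using that by simp
      finally show ?thesis .
    qed
    have gHH: "gi \<Omega> H H = (\<Sum>i\<in>{1..N}. lam i * (a i * a i))"
    proof -
      have "gi \<Omega> H H = (\<Sum>i\<in>{1..N}. a i * gi \<Omega> (Bg i) H)"
        by (subst (1) H_def, rule F.B_lin) (use FB FH in auto)
      then show ?thesis using gBH by (simp add: algebra_simps)
    qed
    have gHG: "gi \<Omega> H G = (\<Sum>i\<in>{1..N}. lam i * (a i * a i))"
    proof -
      have "gi \<Omega> H G = (\<Sum>i\<in>{1..N}. a i * gi \<Omega> (Bg i) G)"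
        by (subst (1) H_def, rule F.B_lin) (use FB FG in auto)
      then show ?thesis using gBG by (simp add: algebra_simps)
    qed
    have "0 \<le> gi \<Omega> (\<lambda>x. G x - H x) (\<lambda>x. G x - H x)" using F.B_pos F.diff FG FH by blast
    also have "\<dots> = gi \<Omega> G G - 2 * gi \<Omega> H G + gi \<Omega> H H"
      using FG FH F.diff F.B_sym[OF FG FH]
      by (simp add: F.B_diff F.B_diff_r)
    finally show ?thesis using gHH gHG gGG by simp
  qed
  have lhj: "lamh k \<le> lamh j" if "k \<in> {1..j}" for k
    using mono_from[of 1 n lamh k j] deig_mono that jn by auto
  have lj: "lam j \<le> lam i" if "i \<ge> j" for i
    using mono_from[of 1 i lam j i] eig_mono that jn by auto
  define SN where "SN N = (\<Sum>i\<in>{1..N}. a i * a i)" for N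
  have ineqN: "lam j * SN N \<le> lamh j * W" for N
  proof -
    have "lam j * SN N = (\<Sum>i\<in>{1..N}. lam j * (a i * a i))" by (simp add: SN_def sum_distrib_left)
    also have "\<dots> \<le> (\<Sum>i\<in>{1..N}. lam i * (a i * a i))"
    proof (rule sum_mono)
      fix i assume i: "i \<in> {1..N}"
      show "lam j * (a i * a i) \<le> lam i * (a i * a i)"
      proof (cases "i < j")
        case True then show ?thesis using a0 i by auto
      next
        case False then show ?thesis using lj[of i] by (intro mult_right_mono) auto
      qed
    qed
    also have "\<dots> \<le> (\<Sum>k\<in>{1..j}. lamh k * (c k * c k))" by (rule Nbound)
    also have "\<dots> \<le> (\<Sum>k\<in>{1..j}. lamh j * (c k * c k))"
      using lhj by (intro sum_mono mult_right_mono) auto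
    also have "\<dots> = lamh j * W" by (simp add: W_def sum_distrib_left)
    finally show ?thesis .
  qed
  have resid: "(l2norm \<Omega> (\<lambda>x. w x - (\<Sum>i\<in>{1..N}. l2inner \<Omega> w (u i) * u i x)))\<^sup>2 = W - SN N" for N
  proof -
    define P where "P = (\<lambda>x. \<Sum>i\<in>{1..N}. a i *\<^sub>R u i x)"
    have Peq: "(\<Sum>i\<in>{1..N}. l2inner \<Omega> w (u i) * u i x) = P x" for x by (simp add: P_def a_def)
    have LP: "P \<in> {w. L2 \<Omega> w}" unfolding P_def by (rule L.lin_mem) (use Lu in auto)
    have uP: "l2inner \<Omega> (u i) P = a i" if "i \<in> {1..N}" for i
    proof -
      have "l2inner \<Omega> (u i) P = (\<Sum>l\<in>{1..N}. a l * l2inner \<Omega> (u i) (u l))"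
        unfolding P_def by (rule L.B_lin_r) (use Lu that in auto)
      also have "\<dots> = (\<Sum>l\<in>{1..N}. (if i = l then a l else 0))"
        using eig_on that by (intro sum.cong) auto
      also have "\<dots> = a i" using that by simp
      finally show ?thesis .
    qed
    have PP: "l2inner \<Omega> P P = SN N"
    proof -
      have "l2inner \<Omega> P P = (\<Sum>i\<in>{1..N}. a i * l2inner \<Omega> (u i) P)"
        by (subst (1) P_def, rule L.B_lin) (use Lu LP in auto)
      then show ?thesis using uP by (simp add: SN_def)
    qed
    have wP: "l2inner \<Omega> P w = SN N"
    proof -
      have "l2inner \<Omega> P w = (\<Sum>i\<in>{1..N}. a i * l2inner \<Omega> (u i) w)"
        by (subst (1) P_def, rule L.B_lin) (use Lu Lw in auto)
      then show ?thesis using L.B_sym Lu Lw by (simp add: SN_def a_def)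
    qed
    have "l2inner \<Omega> (\<lambda>x. w x - P x) (\<lambda>x. w x - P x) = W - SN N"
      using Lw LP L.diff L.B_sym[OF Lw LP] ww PP wP by (simp add: L.B_diff L.B_diff_r)
    moreover have "0 \<le> l2inner \<Omega> (\<lambda>x. w x - P x) (\<lambda>x. w x - P x)" using L.B_pos L.diff Lw LP by blast
    ultimately show ?thesis unfolding l2norm_def Peq by simp
  qed
  have "(\<lambda>N. (l2norm \<Omega> (\<lambda>x. w x - (\<Sum>i\<in>{1..N}. l2inner \<Omega> w (u i) * u i x)))\<^sup>2) \<longlonglongrightarrow> 0\<^sup>2"
    using eig_basis Lw by (intro tendsto_power) auto
  moreover have "(\<lambda>N. (l2norm \<Omega> (\<lambda>x. w x - (\<Sum>i\<in>{1..N}. l2inner \<Omega> w (u i) * u i x)))\<^sup>2) = (\<lambda>N. W - SN N)"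
    using resid by (rule ext)
  ultimately have "(\<lambda>N. W - SN N) \<longlonglongrightarrow> 0\<^sup>2" by (simp only:)
  then have "(\<lambda>N. W - SN N) \<longlonglongrightarrow> 0" by simp
  then have "(\<lambda>N. W - (W - SN N)) \<longlonglongrightarrow> W - 0" by (intro tendsto_diff) auto
  then have "SN \<longlonglongrightarrow> W" by simp
  then have "(\<lambda>N. lam j * SN N) \<longlonglongrightarrow> lam j * W" by (intro tendsto_mult) auto
  then have "lam j * W \<le> lamh j * W" using ineqN
    by (intro LIMSEQ_le_const2) auto
  then show ?thesis using Wpos by simp
qed



lemma abs_mul_le: fixes a b A B :: real
  assumes "\<bar>a\<bar> \<le> A" "\<bar>b\<bar> \<le> B" shows "\<bar>a * b\<bar> \<le> A * B"
  using assms by (simp add: abs_mult mult_mono')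

lemma abs_add_le: fixes x y X Y :: real
  shows "\<bar>x\<bar> \<le> X \<Longrightarrow> \<bar>y\<bar> \<le> Y \<Longrightarrow> \<bar>x + y\<bar> \<le> X + Y"
  using abs_triangle_ineq[of x y] by linarith

lemma real_final:
  fixes N0 N1 F \<delta> \<omega> \<omega>h M Cd Sd \<alpha> \<alpha>h \<beta> \<beta>h ch c sh s J1 J2 J3 :: real
  assumes \<omega>: "\<omega> > 0" "\<omega> \<le> \<omega>h" and nn: "N0 \<ge> 0" "N1 \<ge> 0" "F \<ge> 0" "\<delta> \<ge> 0" "M \<ge> 0"
    and al: "\<bar>\<alpha>\<bar> \<le> N0" "\<bar>\<alpha>h - \<alpha>\<bar> \<le> N0 * \<delta>" and be: "\<bar>\<beta>\<bar> \<le> N1" "\<bar>\<beta>h - \<beta>\<bar> \<le> N1 * \<delta>"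
    and tr: "\<bar>ch\<bar> \<le> 1" "\<bar>c\<bar> \<le> 1" "\<bar>sh\<bar> \<le> 1" "\<bar>s\<bar> \<le> 1"
    and J: "\<bar>J1\<bar> \<le> F * \<delta>" "\<bar>J2\<bar> \<le> F" "\<bar>J3\<bar> \<le> M * F" "\<bar>J2 - J3\<bar> \<le> F"
  shows "\<bar>(\<alpha>h * ch + \<beta>h / \<omega>h * sh + 1 / \<omega>h * (J1 + J2)) - (\<alpha> * c + \<beta> / \<omega> * s + 1 / \<omega> * (J2 - J3))\<bar>
         + \<bar>\<alpha> * c + \<beta> / \<omega> * s + 1 / \<omega> * (J2 - J3)\<bar> * \<delta>
    \<le> N0 * (2 * \<delta> + \<bar>ch - c\<bar>) + N1 / \<omega> * ((\<omega>h - \<omega>) / \<omega> + 2 * \<delta> + \<bar>sh - s\<bar>)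
       + 1 / \<omega> * F * ((\<omega>h - \<omega>) / \<omega> + 2 * \<delta> + M)"
proof -
  define r where "r = 1 / \<omega>"
  define q where "q = (\<omega>h - \<omega>) / \<omega>"
  have r0: "r > 0" using \<omega> by (simp add: r_def)
  have q0: "q \<ge> 0" using \<omega> by (simp add: q_def)
  have \<omega>h0: "\<omega>h > 0" using \<omega> by simp
  have rh: "1 / \<omega>h \<le> r" using \<omega> by (simp add: r_def frac_le)
  have rh0: "1 / \<omega>h \<ge> 0" using \<omega>h0 by simp
  have dr: "\<bar>1 / \<omega>h - 1 / \<omega>\<bar> \<le> q * r"
  proof -
    have "1 / \<omega>h - 1 / \<omega> = - ((\<omega>h - \<omega>) / (\<omega> * \<omega>h))" using \<omega> \<omega>h0 by (simp add: field_simps)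
    then have "\<bar>1 / \<omega>h - 1 / \<omega>\<bar> = (\<omega>h - \<omega>) / (\<omega> * \<omega>h)" using \<omega> by simp
    also have "\<dots> \<le> (\<omega>h - \<omega>) / (\<omega> * \<omega>)" using \<omega> by (intro divide_left_mono mult_left_mono) auto
    also have "\<dots> = q * r" by (simp add: q_def r_def)
    finally show ?thesis .
  qed
  have T1: "\<bar>(\<alpha>h - \<alpha>) * ch\<bar> \<le> N0 * \<delta> * 1" by (rule abs_mul_le) (use al tr in auto)
  have T2: "\<bar>\<alpha> * (ch - c)\<bar> \<le> N0 * \<bar>ch - c\<bar>" by (rule abs_mul_le) (use al in auto)
  have T3: "\<bar>(\<beta>h - \<beta>) * sh * (1/\<omega>h)\<bar> \<le> N1 * \<delta> * 1 * r"
    by (rule abs_mul_le, rule abs_mul_le) (use be tr rh rh0 in auto)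
  have T4: "\<bar>\<beta> * sh * (1 / \<omega>h - 1 / \<omega>)\<bar> \<le> N1 * 1 * (q * r)"
    by (rule abs_mul_le, rule abs_mul_le) (use be tr dr in auto)
  have T5: "\<bar>\<beta> * r * (sh - s)\<bar> \<le> N1 * r * \<bar>sh - s\<bar>"
    by (rule abs_mul_le, rule abs_mul_le) (use be r0 in auto)
  have T6: "\<bar>J1 * (1 / \<omega>h)\<bar> \<le> F * \<delta> * r" by (rule abs_mul_le) (use J rh rh0 in auto)
  have T7: "\<bar>J2 * (1 / \<omega>h - 1 / \<omega>)\<bar> \<le> F * (q * r)" by (rule abs_mul_le) (use J dr in auto)
  have T8: "\<bar>J3 * r\<bar> \<le> M * F * r" by (rule abs_mul_le) (use J r0 in auto)
  have D1: "\<bar>\<alpha> * c\<bar> \<le> N0 * 1" by (rule abs_mul_le) (use al tr in auto)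
  have D2: "\<bar>\<beta> * r * s\<bar> \<le> N1 * r * 1" by (rule abs_mul_le, rule abs_mul_le) (use be tr r0 in auto)
  have D3: "\<bar>(J2 - J3) * r\<bar> \<le> F * r"
    by (rule abs_mul_le) (use J r0 in auto)
  let ?d = "\<alpha> * c + \<beta> / \<omega> * s + 1 / \<omega> * (J2 - J3)"
  have deq: "?d = \<alpha> * c + \<beta> * r * s + (J2 - J3) * r" by (simp add: r_def)
  have dh_d: "(\<alpha>h * ch + \<beta>h / \<omega>h * sh + 1 / \<omega>h * (J1 + J2)) - ?d =
     (\<alpha>h - \<alpha>) * ch + \<alpha> * (ch - c) + (\<beta>h - \<beta>) * sh * (1/\<omega>h) + \<beta> * sh * (1 / \<omega>h - 1 / \<omega>)
     + \<beta> * r * (sh - s) + J1 * (1 / \<omega>h) + J2 * (1 / \<omega>h - 1 / \<omega>) + J3 * r"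
    by (simp add: r_def divide_inverse algebra_simps)
  have A: "\<bar>(\<alpha>h * ch + \<beta>h / \<omega>h * sh + 1 / \<omega>h * (J1 + J2)) - ?d\<bar> \<le>
     N0 * \<delta> * 1 + N0 * \<bar>ch - c\<bar> + N1 * \<delta> * 1 * r + N1 * 1 * (q * r) + N1 * r * \<bar>sh - s\<bar> + F * \<delta> * r + F * (q * r) + M * F * r"
    unfolding dh_d using T1 T2 T3 T4 T5 T6 T7 T8 by (intro abs_add_le) assumption+
  have "\<bar>?d\<bar> \<le> N0 * 1 + N1 * r * 1 + F * r" unfolding deq using D1 D2 D3 by (intro abs_add_le) assumption+
  hence Bd: "\<bar>?d\<bar> * \<delta> \<le> (N0 * 1 + N1 * r * 1 + F * r) * \<delta>" using nn by (intro mult_right_mono) auto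
  have R: "N0 * (2 * \<delta> + \<bar>ch - c\<bar>) + N1 / \<omega> * ((\<omega>h - \<omega>) / \<omega> + 2 * \<delta> + \<bar>sh - s\<bar>)
       + 1 / \<omega> * F * ((\<omega>h - \<omega>) / \<omega> + 2 * \<delta> + M)
     = (N0 * \<delta> * 1 + N0 * \<bar>ch - c\<bar> + N1 * \<delta> * 1 * r + N1 * 1 * (q * r) + N1 * r * \<bar>sh - s\<bar> + F * \<delta> * r + F * (q * r) + M * F * r)
       + (N0 * 1 + N1 * r * 1 + F * r) * \<delta>"
    by (simp add: r_def q_def divide_inverse algebra_simps)
  show ?thesis unfolding R using A Bd by linarith
qed



lemma cont_by:
  fixes h :: "real \<Rightarrow> real" and G :: "real \<Rightarrow> real \<Rightarrow> real"
  assumes G: "\<And>s. s \<in> S \<Longrightarrow> ((\<lambda>r. G r s) \<longlongrightarrow> 0) (at s within S)"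
    and le: "\<And>r s. r \<in> S \<Longrightarrow> s \<in> S \<Longrightarrow> \<bar>h r - h s\<bar> \<le> G r s"
  shows "continuous_on S h"
  unfolding continuous_on_def
proof
  fix s assume s: "s \<in> S"
  have ev: "eventually (\<lambda>r. norm (h r - h s) \<le> G r s) (at s within S)"
    unfolding eventually_at_filter using le s by (auto intro!: always_eventually)
  have "((\<lambda>r. h r - h s) \<longlongrightarrow> 0) (at s within S)"
    by (rule Lim_null_comparison[OF ev G[OF s]])
  then show "(h \<longlongrightarrow> h s) (at s within S)" by (rule LIM_zero_cancel)
qed

theorem theorem4p3:
  fixes \<Omega> :: "(real^'d) set"
    and V Vh :: "(real^'d \<Rightarrow> real) set"
    and n :: nat and T :: real
    and lam :: "nat \<Rightarrow> real" and u :: "nat \<Rightarrow> real^'d \<Rightarrow> real"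
    and lamh :: "nat \<Rightarrow> real" and uh :: "nat \<Rightarrow> real^'d \<Rightarrow> real"
    and u0 v0 :: "real^'d \<Rightarrow> real" and f :: "real \<Rightarrow> real^'d \<Rightarrow> real"
    and j :: nat and t :: real
  assumes \<Omega>: "open \<Omega>" "connected \<Omega>" "\<Omega> \<noteq> {}"
    and T: "T > 0"
    and V: "closed_H1_subspace \<Omega> V"
    and eig_mem: "\<And>i. i \<ge> 1 \<Longrightarrow> u i \<in> V"
    and eig_eq: "\<And>i v. i \<ge> 1 \<Longrightarrow> v \<in> V \<Longrightarrow> agrad \<Omega> (u i) v = lam i * l2inner \<Omega> (u i) v"
    and eig_pos: "0 < lam 1"
    and eig_mono: "\<And>i. i \<ge> 1 \<Longrightarrow> lam i \<le> lam (Suc i)"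
    and eig_on: "\<And>i k. i \<ge> 1 \<Longrightarrow> k \<ge> 1 \<Longrightarrow> l2inner \<Omega> (u i) (u k) = (if i = k then 1 else 0)"
    and eig_basis: "\<And>w. L2 \<Omega> w \<Longrightarrow>
          (\<lambda>N. l2norm \<Omega> (\<lambda>x. w x - (\<Sum>i\<in>{1..N}. l2inner \<Omega> w (u i) * u i x))) \<longlonglongrightarrow> 0"
    and Vh_sub: "Vh \<subseteq> V"
    and Vh: "galerkin_space \<Omega> V n Vh"
    and deig_mem: "\<And>i. i \<in> {1..n} \<Longrightarrow> uh i \<in> Vh"
    and deig_eq: "\<And>i v. i \<in> {1..n} \<Longrightarrow> v \<in> Vh \<Longrightarrow> agrad \<Omega> (uh i) v = lamh i * l2inner \<Omega> (uh i) v"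
    and deig_pos: "n \<ge> 1 \<Longrightarrow> 0 < lamh 1"
    and deig_mono: "\<And>i. i \<in> {1..<n} \<Longrightarrow> lamh i \<le> lamh (Suc i)"
    and deig_on: "\<And>i k. i \<in> {1..n} \<Longrightarrow> k \<in> {1..n} \<Longrightarrow>
          l2inner \<Omega> (uh i) (uh k) = (if i = k then 1 else 0)"
    and u0: "L2 \<Omega> u0" and v0: "L2 \<Omega> v0"
    and f_L2: "\<And>s. s \<in> {0..T} \<Longrightarrow> L2 \<Omega> (f s)"
    and f_cont: "\<And>s. s \<in> {0..T} \<Longrightarrow>
          ((\<lambda>r. l2norm \<Omega> (\<lambda>x. f r x - f s x)) \<longlongrightarrow> 0) (at s within {0..T})"
    and j: "j \<in> {1..n}" and t: "t \<in> {0..T}"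
  shows
    "let \<omega> = sqrt (lam j); \<omega>h = sqrt (lamh j);
         d = modal_coeff \<omega> (l2inner \<Omega> u0 (u j)) (l2inner \<Omega> v0 (u j))
               (\<lambda>\<tau>. l2inner \<Omega> (f \<tau>) (u j)) t;
         dh = modal_coeff \<omega>h (l2inner \<Omega> u0 (uh j)) (l2inner \<Omega> v0 (uh j))
               (\<lambda>\<tau>. l2inner \<Omega> (f \<tau>) (uh j)) t;
         \<delta> = l2norm \<Omega> (\<lambda>x. uh j x - u j x)
     in l2norm \<Omega> (\<lambda>x. dh * uh j x - d * u j x)
        \<le> l2norm \<Omega> u0 * (2 * \<delta> + \<bar>cos (\<omega>h * t) - cos (\<omega> * t)\<bar>)
          + l2norm \<Omega> v0 / \<omega> * ((\<omega>h - \<omega>) / \<omega> + 2 * \<delta> + \<bar>sin (\<omega>h * t) - sin (\<omega> * t)\<bar>)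
          + 1 / \<omega> * integral {0..t} (\<lambda>\<tau>. l2norm \<Omega> (f \<tau>))
              * ((\<omega>h - \<omega>) / \<omega> + 2 * \<delta>
                 + (SUP \<tau>\<in>{0..t}. \<bar>sin (\<omega>h * \<tau>) - sin (\<omega> * \<tau>)\<bar>))"
proof -
  interpret L: sip "{w. L2 \<Omega> w}" "l2inner \<Omega>" by (rule L2_sip)
  have H1V0: "\<forall>v\<in>V. H1 \<Omega> v" using V unfolding closed_H1_subspace_def by (rule conjunct1)
  have H1V: "H1 \<Omega> v" if "v \<in> V" for v using H1V0 that by (rule bspec)
  have jn: "1 \<le> j" "j \<le> n" using j by auto
  have Lu: "u j \<in> {w. L2 \<Omega> w}" using H1V[OF eig_mem[OF jn(1)]] by (simp add: H1_def)
  have Luh: "uh j \<in> {w. L2 \<Omega> w}" using H1V[OF subsetD[OF Vh_sub deig_mem[OF j]]] by (simp add: H1_def)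
  have nu: "l2inner \<Omega> (u j) (u j) = 1" using eig_on[OF jn(1) jn(1)] by simp
  have nuh: "l2inner \<Omega> (uh j) (uh j) = 1" using deig_on[OF j j] by simp
  have lamj: "lam 1 \<le> lam j" using mono_from[of 1 j lam 1 j] eig_mono jn by auto
  have lamle: "lam j \<le> lamh j"
    by (rule eig_compare[OF V eig_mem eig_eq eig_mono eig_on eig_basis Vh_sub deig_mem deig_eq deig_mono deig_on j])
  define \<omega> where "\<omega> = sqrt (lam j)"
  define \<omega>h where "\<omega>h = sqrt (lamh j)"
  have \<omega>0: "\<omega> > 0" using eig_pos lamj by (simp add: \<omega>_def)
  have \<omega>le: "\<omega> \<le> \<omega>h" using lamle by (simp add: \<omega>_def \<omega>h_def)
  define \<delta> where "\<delta> = l2norm \<Omega> (\<lambda>x. uh j x - u j x)"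
  have Ldiff: "(\<lambda>x. uh j x - u j x) \<in> {w. L2 \<Omega> w}" using L.diff Luh Lu by blast
  have nn: "l2norm \<Omega> g \<ge> 0" if "L2 \<Omega> g" for g using L.B_pos[of g] that by (simp add: l2norm_def)
  have \<delta>0: "\<delta> \<ge> 0" using nn Ldiff by (simp add: \<delta>_def)
  have CS1: "\<bar>l2inner \<Omega> g (u j)\<bar> \<le> l2norm \<Omega> g" if "L2 \<Omega> g" for g
    using L.CS_abs[of g "u j"] that Lu nu by (simp add: l2norm_def)
  have CS1h: "\<bar>l2inner \<Omega> g (uh j)\<bar> \<le> l2norm \<Omega> g" if "L2 \<Omega> g" for g
    using L.CS_abs[of g "uh j"] that Luh nuh by (simp add: l2norm_def)
  have CS2: "\<bar>l2inner \<Omega> g (uh j) - l2inner \<Omega> g (u j)\<bar> \<le> l2norm \<Omega> g * \<delta>" if "L2 \<Omega> g" for g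
  proof -
    have "l2inner \<Omega> g (uh j) - l2inner \<Omega> g (u j) = l2inner \<Omega> g (\<lambda>x. uh j x - u j x)"
      using L.B_diff_r[of "uh j" "u j" g] that Lu Luh by simp
    then show ?thesis using L.CS_abs[of g "\<lambda>x. uh j x - u j x"] that Ldiff by (simp add: l2norm_def \<delta>_def)
  qed
  define fj where "fj \<tau> = l2inner \<Omega> (f \<tau>) (u j)" for \<tau>
  define fhj where "fhj \<tau> = l2inner \<Omega> (f \<tau>) (uh j)" for \<tau>
  define nf where "nf \<tau> = l2norm \<Omega> (f \<tau>)" for \<tau>
  define G where "G r s = l2norm \<Omega> (\<lambda>x. f r x - f s x)" for r s
  have Lf: "f s \<in> {w. L2 \<Omega> w}" if "s \<in> {0..T}" for s using f_L2 that by simp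
  have Gc: "((\<lambda>r. G r s) \<longlongrightarrow> 0) (at s within {0..T})" if "s \<in> {0..T}" for s
    using f_cont[OF that] by (simp add: G_def)
  have Ld: "(\<lambda>x. f r x - f s x) \<in> {w. L2 \<Omega> w}" if "r \<in> {0..T}" "s \<in> {0..T}" for r s
    using L.diff Lf that by blast
  have c_fj: "continuous_on {0..T} fj"
  proof (rule cont_by[OF Gc])
    fix r s assume rs: "r \<in> {0..T}" "s \<in> {0..T}"
    have "fj r - fj s = l2inner \<Omega> (\<lambda>x. f r x - f s x) (u j)"
      using L.B_diff[of "f r" "f s" "u j"] Lf rs Lu by (simp add: fj_def)
    then show "\<bar>fj r - fj s\<bar> \<le> G r s" using CS1 Ld[OF rs] by (simp add: G_def)
  qed
  have c_fhj: "continuous_on {0..T} fhj"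
  proof (rule cont_by[OF Gc])
    fix r s assume rs: "r \<in> {0..T}" "s \<in> {0..T}"
    have "fhj r - fhj s = l2inner \<Omega> (\<lambda>x. f r x - f s x) (uh j)"
      using L.B_diff[of "f r" "f s" "uh j"] Lf rs Luh by (simp add: fhj_def)
    then show "\<bar>fhj r - fhj s\<bar> \<le> G r s" using CS1h Ld[OF rs] by (simp add: G_def)
  qed
  have c_nf: "continuous_on {0..T} nf"
  proof (rule cont_by[OF Gc])
    fix r s assume rs: "r \<in> {0..T}" "s \<in> {0..T}"
    have e1: "f r = (\<lambda>x. (f r x - f s x) + f s x)" by simp
    have t1: "nf r \<le> G r s + nf s"
      using L.tri[OF Ld[OF rs] Lf[OF rs(2)]] unfolding nf_def G_def l2norm_def by (simp only: e1[symmetric])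
    have e2: "f s = (\<lambda>x. ((-1) *\<^sub>R (f r x - f s x)) + f r x)" by simp
    have sc: "l2norm \<Omega> (\<lambda>x. (-1) *\<^sub>R (f r x - f s x)) = G r s"
      using L.nscale[OF Ld[OF rs], of "-1"] unfolding G_def l2norm_def by simp
    have t2: "nf s \<le> G r s + nf r"
      using L.tri[OF L.scale[OF Ld[OF rs]] Lf[OF rs(1)], of "-1"] sc unfolding nf_def l2norm_def
      by (simp only: e2[symmetric])
    show "\<bar>nf r - nf s\<bar> \<le> G r s" using t1 t2 by linarith
  qed
  have sub: "{0..t} \<subseteq> {0..T}" using t by auto
  have t0: "t \<ge> 0" using t by simp
  have c_fj': "continuous_on {0..t} fj" using continuous_on_subset[OF c_fj sub] .
  have c_fhj': "continuous_on {0..t} fhj" using continuous_on_subset[OF c_fhj sub] .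
  have c_nf': "continuous_on {0..t} nf" using continuous_on_subset[OF c_nf sub] .
  define ks where "ks \<tau> = sin (\<omega>h * (t - \<tau>))" for \<tau>
  define k where "k \<tau> = sin (\<omega> * (t - \<tau>))" for \<tau>
  have c_ks: "continuous_on {0..t} ks" unfolding ks_def by (intro continuous_intros)
  have c_k: "continuous_on {0..t} k" unfolding k_def by (intro continuous_intros)
  define M where "M = (SUP \<tau>\<in>{0..t}. \<bar>sin (\<omega>h * \<tau>) - sin (\<omega> * \<tau>)\<bar>)"
  define F where "F = integral {0..t} (\<lambda>\<tau>. l2norm \<Omega> (f \<tau>))"
  have bdd: "bdd_above ((\<lambda>\<tau>. \<bar>sin (\<omega>h * \<tau>) - sin (\<omega> * \<tau>)\<bar>) ` {0..t})"
  proof (rule bdd_aboveI2)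
    fix \<tau> show "\<bar>sin (\<omega>h * \<tau>) - sin (\<omega> * \<tau>)\<bar> \<le> 2"
      using abs_sin_le_one[of "\<omega>h * \<tau>"] abs_sin_le_one[of "\<omega> * \<tau>"] by linarith
  qed
  have Mub: "\<bar>ks \<tau> - k \<tau>\<bar> \<le> M" if "\<tau> \<in> {0..t}" for \<tau>
  proof -
    have "t - \<tau> \<in> {0..t}" using that by auto
    from cSUP_upper[OF this bdd] show ?thesis by (simp add: M_def ks_def k_def)
  qed
  have M0: "M \<ge> 0" using Mub[of 0] t0 by (smt (verit) atLeastAtMost_iff abs_ge_zero)
  have nfnn: "nf \<tau> \<ge> 0" if "\<tau> \<in> {0..t}" for \<tau> using nn f_L2 sub that by (auto simp: nf_def)
  have int_nf: "nf integrable_on {0..t}" by (rule integrable_continuous_interval[OF c_nf'])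
  have nfe: "nf = (\<lambda>\<tau>. l2norm \<Omega> (f \<tau>))" by (rule ext) (simp add: nf_def)
  have Fnf: "integral {0..t} nf = F" by (simp add: F_def nfe)
  have F0: "F \<ge> 0" using integral_nonneg[OF int_nf nfnn] Fnf by simp
  have int1: "(\<lambda>\<tau>. ks \<tau> * (fhj \<tau> - fj \<tau>)) integrable_on {0..t}"
    by (rule integrable_continuous_interval) (intro continuous_intros c_ks c_fj' c_fhj')
  have int2: "(\<lambda>\<tau>. ks \<tau> * fj \<tau>) integrable_on {0..t}"
    by (rule integrable_continuous_interval) (intro continuous_intros c_ks c_fj')
  have int3: "(\<lambda>\<tau>. (ks \<tau> - k \<tau>) * fj \<tau>) integrable_on {0..t}"
    by (rule integrable_continuous_interval) (intro continuous_intros c_ks c_k c_fj')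
  have int4: "(\<lambda>\<tau>. k \<tau> * fj \<tau>) integrable_on {0..t}"
    by (rule integrable_continuous_interval) (intro continuous_intros c_k c_fj')
  have int5: "(\<lambda>\<tau>. nf \<tau> * \<delta>) integrable_on {0..t}"
    by (rule integrable_continuous_interval) (intro continuous_intros c_nf')
  have int6: "(\<lambda>\<tau>. M * nf \<tau>) integrable_on {0..t}"
    by (rule integrable_continuous_interval) (intro continuous_intros c_nf')
  define J1 where "J1 = integral {0..t} (\<lambda>\<tau>. ks \<tau> * (fhj \<tau> - fj \<tau>))"
  define J2 where "J2 = integral {0..t} (\<lambda>\<tau>. ks \<tau> * fj \<tau>)"
  define J3 where "J3 = integral {0..t} (\<lambda>\<tau>. (ks \<tau> - k \<tau>) * fj \<tau>)"
  have Ih: "integral {0..t} (\<lambda>\<tau>. sin (\<omega>h * (t - \<tau>)) * l2inner \<Omega> (f \<tau>) (uh j)) = J1 + J2"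
  proof -
    have "integral {0..t} (\<lambda>\<tau>. sin (\<omega>h * (t - \<tau>)) * l2inner \<Omega> (f \<tau>) (uh j))
       = integral {0..t} (\<lambda>\<tau>. ks \<tau> * (fhj \<tau> - fj \<tau>) + ks \<tau> * fj \<tau>)"
      by (simp add: ks_def fhj_def algebra_simps)
    also have "\<dots> = J1 + J2" unfolding J1_def J2_def by (rule Henstock_Kurzweil_Integration.integral_add[OF int1 int2])
    finally show ?thesis .
  qed
  have I: "integral {0..t} (\<lambda>\<tau>. sin (\<omega> * (t - \<tau>)) * l2inner \<Omega> (f \<tau>) (u j)) = J2 - J3"
  proof -
    have "integral {0..t} (\<lambda>\<tau>. sin (\<omega> * (t - \<tau>)) * l2inner \<Omega> (f \<tau>) (u j))
       = integral {0..t} (\<lambda>\<tau>. ks \<tau> * fj \<tau> - (ks \<tau> - k \<tau>) * fj \<tau>)"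
      by (simp add: k_def fj_def algebra_simps)
    also have "\<dots> = J2 - J3" unfolding J3_def J2_def by (rule Henstock_Kurzweil_Integration.integral_diff[OF int2 int3])
    finally show ?thesis .
  qed
  have Lft: "L2 \<Omega> (f \<tau>)" if "\<tau> \<in> {0..t}" for \<tau> using f_L2 sub that by auto
  have J1b: "\<bar>J1\<bar> \<le> F * \<delta>"
  proof -
    have "norm J1 \<le> integral {0..t} (\<lambda>\<tau>. nf \<tau> * \<delta>)"
      unfolding J1_def
    proof (rule integral_norm_bound_integral[OF int1 int5])
      fix \<tau> assume \<tau>: "\<tau> \<in> {0..t}"
      have "\<bar>ks \<tau> * (fhj \<tau> - fj \<tau>)\<bar> \<le> 1 * (nf \<tau> * \<delta>)"
        by (rule abs_mul_le) (use CS2[OF Lft[OF \<tau>]] in \<open>auto simp: ks_def fhj_def fj_def nf_def\<close>)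
      then show "norm (ks \<tau> * (fhj \<tau> - fj \<tau>)) \<le> nf \<tau> * \<delta>" by simp
    qed
    also have "\<dots> = F * \<delta>" using Fnf by simp
    finally show ?thesis by simp
  qed
  have J2b: "\<bar>J2\<bar> \<le> F"
  proof -
    have "norm J2 \<le> integral {0..t} nf"
      unfolding J2_def
    proof (rule integral_norm_bound_integral[OF int2 int_nf])
      fix \<tau> assume \<tau>: "\<tau> \<in> {0..t}"
      have "\<bar>ks \<tau> * fj \<tau>\<bar> \<le> 1 * nf \<tau>"
        by (rule abs_mul_le) (use CS1[OF Lft[OF \<tau>]] in \<open>auto simp: ks_def fj_def nf_def\<close>)
      then show "norm (ks \<tau> * fj \<tau>) \<le> nf \<tau>" by simp
    qed
    then show ?thesis using Fnf by simp
  qed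
  have J3b: "\<bar>J3\<bar> \<le> M * F"
  proof -
    have "norm J3 \<le> integral {0..t} (\<lambda>\<tau>. M * nf \<tau>)"
      unfolding J3_def
    proof (rule integral_norm_bound_integral[OF int3 int6])
      fix \<tau> assume \<tau>: "\<tau> \<in> {0..t}"
      have "\<bar>(ks \<tau> - k \<tau>) * fj \<tau>\<bar> \<le> M * nf \<tau>"
        by (rule abs_mul_le) (use CS1[OF Lft[OF \<tau>]] Mub[OF \<tau>] in \<open>auto simp: fj_def nf_def\<close>)
      then show "norm ((ks \<tau> - k \<tau>) * fj \<tau>) \<le> M * nf \<tau>" by simp
    qed
    also have "\<dots> = M * F" using Fnf by simp
    finally show ?thesis by simp
  qed
  have J23b: "\<bar>J2 - J3\<bar> \<le> F"
  proof -
    have "norm (integral {0..t} (\<lambda>\<tau>. k \<tau> * fj \<tau>)) \<le> integral {0..t} nf"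
    proof (rule integral_norm_bound_integral[OF int4 int_nf])
      fix \<tau> assume \<tau>: "\<tau> \<in> {0..t}"
      have "\<bar>k \<tau> * fj \<tau>\<bar> \<le> 1 * nf \<tau>"
        by (rule abs_mul_le) (use CS1[OF Lft[OF \<tau>]] in \<open>auto simp: k_def fj_def nf_def\<close>)
      then show "norm (k \<tau> * fj \<tau>) \<le> nf \<tau>" by simp
    qed
    moreover have "integral {0..t} (\<lambda>\<tau>. k \<tau> * fj \<tau>) = J2 - J3" using I by (simp add: k_def fj_def)
    ultimately show ?thesis using Fnf by simp
  qed
  define d where "d = modal_coeff \<omega> (l2inner \<Omega> u0 (u j)) (l2inner \<Omega> v0 (u j))
               (\<lambda>\<tau>. l2inner \<Omega> (f \<tau>) (u j)) t"
  define dh where "dh = modal_coeff \<omega>h (l2inner \<Omega> u0 (uh j)) (l2inner \<Omega> v0 (uh j))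
               (\<lambda>\<tau>. l2inner \<Omega> (f \<tau>) (uh j)) t"
  have deq: "d = l2inner \<Omega> u0 (u j) * cos (\<omega> * t) + l2inner \<Omega> v0 (u j) / \<omega> * sin (\<omega> * t) + 1 / \<omega> * (J2 - J3)"
    unfolding d_def modal_coeff_def I ..
  have dheq: "dh = l2inner \<Omega> u0 (uh j) * cos (\<omega>h * t) + l2inner \<Omega> v0 (uh j) / \<omega>h * sin (\<omega>h * t) + 1 / \<omega>h * (J1 + J2)"
    unfolding dh_def modal_coeff_def Ih ..
  have Lnorm: "l2norm \<Omega> (\<lambda>x. dh * uh j x - d * u j x) \<le> \<bar>dh - d\<bar> + \<bar>d\<bar> * \<delta>"
  proof -
    have e: "(\<lambda>x. dh * uh j x - d * u j x) = (\<lambda>x. (dh - d) *\<^sub>R uh j x + d *\<^sub>R (uh j x - u j x))"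
      by (simp add: algebra_simps)
    have "l2norm \<Omega> (\<lambda>x. dh * uh j x - d * u j x)
        \<le> l2norm \<Omega> (\<lambda>x. (dh - d) *\<^sub>R uh j x) + l2norm \<Omega> (\<lambda>x. d *\<^sub>R (uh j x - u j x))"
      unfolding e l2norm_def by (rule L.tri[OF L.scale[OF Luh] L.scale[OF Ldiff]])
    also have "\<dots> = \<bar>dh - d\<bar> + \<bar>d\<bar> * \<delta>"
      unfolding l2norm_def L.nscale[OF Luh] L.nscale[OF Ldiff] nuh \<delta>_def by simp
    finally show ?thesis .
  qed
  have Lu0: "L2 \<Omega> u0" by (rule u0)
  have fin: "\<bar>dh - d\<bar> + \<bar>d\<bar> * \<delta> \<le> l2norm \<Omega> u0 * (2 * \<delta> + \<bar>cos (\<omega>h * t) - cos (\<omega> * t)\<bar>)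
          + l2norm \<Omega> v0 / \<omega> * ((\<omega>h - \<omega>) / \<omega> + 2 * \<delta> + \<bar>sin (\<omega>h * t) - sin (\<omega> * t)\<bar>)
          + 1 / \<omega> * F * ((\<omega>h - \<omega>) / \<omega> + 2 * \<delta> + M)"
    unfolding deq dheq
    by (rule real_final[OF \<omega>0 \<omega>le nn[OF u0] nn[OF v0] F0 \<delta>0 M0 CS1[OF u0] CS2[OF u0] CS1[OF v0] CS2[OF v0]
          abs_cos_le_one abs_cos_le_one abs_sin_le_one abs_sin_le_one J1b J2b J3b J23b])
  have final: "l2norm \<Omega> (\<lambda>x. dh * uh j x - d * u j x) \<le> l2norm \<Omega> u0 * (2 * \<delta> + \<bar>cos (\<omega>h * t) - cos (\<omega> * t)\<bar>)
          + l2norm \<Omega> v0 / \<omega> * ((\<omega>h - \<omega>) / \<omega> + 2 * \<delta> + \<bar>sin (\<omega>h * t) - sin (\<omega> * t)\<bar>)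
          + 1 / \<omega> * F * ((\<omega>h - \<omega>) / \<omega> + 2 * \<delta> + M)"
    using Lnorm fin by linarith
  show ?thesis using final unfolding Let_def d_def dh_def \<omega>_def \<omega>h_def \<delta>_def F_def M_def .
qed

end
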